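(* Let $\rho,\sigma$ be commuting quantum states on a $d$-dimensional Hilbert space with $\sigma$ full-rank, and let $1>\epsilon>0$. Let $\rho^\epsilon_{\mathrm{st}}$ and $\rho^\epsilon_{\mathrm{fl}}$ be the $\epsilon$-steep and $\epsilon$-flat approximations of $\rho$ relative to $\sigma$. Then for all $x\in[0,1]$, $$\mathcal L_{\rho^\epsilon_{\mathrm{st}}|\sigma}(x)\ge \ell_{r_{\mathrm{st}}}(x),\quad r_{\mathrm{st}}=2^{S(\rho\|\sigma)-f_\sigma(\rho,\epsilon)},\qquad \mathcal L_{\rho^\epsilon_{\mathrm{fl}}|\sigma}(x)\le \ell_{r_{\mathrm{fl}}}(x),\quad r_{\mathrm{fl}}=2^{S(\rho\|\sigma)+f_\sigma(\rho,\epsilon)},$$ where $f_\sigma(\rho,\epsilon):=\sqrt{V(\rho\|\sigma)(\epsilon^{-1}-1)}$ and $\ell_c(x)=\min(c\,x,1)$.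
   Context: Logs are base 2; $S(\rho\|\sigma)=\mathrm{Tr}(\rho(\log\rho-\log\sigma))$, $V(\rho\|\sigma)=\mathrm{Tr}(\rho(\log\rho-\log\sigma)^2)-S(\rho\|\sigma)^2$, $D(\rho,\tau)=\frac12\|\rho-\tau\|_1$. Write $\sigma=\sum_i s_i|i\rangle\langle i|$, $\rho=\sum_i p_i|i\rangle\langle i|$ in a common eigenbasis ordered so that $p_i/s_i\ge p_{i+1}/s_{i+1}$. For a state $\tau=\sum_i t_i|i\rangle\langle i|$ diagonal in this basis, the Lorenz curve $\mathcal L_{\tau|\sigma}:[0,1]\to[0,1]$ is the piecewise linear curve connecting the points $(\sum_{i\le k}s_{\pi(i)},\sum_{i\le k}t_{\pi(i)})$, $k=0,\dots,d$, where $\pi$ orders the indices so that $t_{\pi(i)}/s_{\pi(i)}$ is non-increasing (it is concave). Flat approximation $\rho^\epsilon_{\mathrm{fl}}=\sum_i\bar p_i|i\rangle\langle i|$: if $D(\rho,\sigma)<\epsilon$ set $\bar p_i=s_i$; otherwise let $M\in\{1,\dots,d-1\}$ be the smallest integer with $\epsilon\le\sum_{i=1}^M p_i-\frac{p_{M+1}}{s_{M+1}}\sum_{i=1}^M s_i$, let $N\in\{2,\dots,d\}$ be the largest integer with $\epsilon\le\frac{p_{N-1}}{s_{N-1}}\sum_{i=N}^d s_i-\sum_{i=N}^d p_i$ (these exist and $M\le N$), and set $\bar p_i=s_i\frac{(\sum_{j=1}^M p_j)-\epsilon}{\sum_{j=1}^M s_j}$ for $i\le M$, $\bar p_i=s_i\frac{(\sum_{j=N}^d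 p_j)+\epsilon}{\sum_{j=N}^d s_j}$ for $i\ge N$, and $\bar p_i=p_i$ otherwise. Steep approximation $\rho^\epsilon_{\mathrm{st}}=\sum_i\hat p_i|i\rangle\langle i|$: if $\epsilon\le 1-p_1$, let $R\in\{2,\dots,d\}$ be the largest index with $\sum_{i=R}^d p_i\ge\epsilon$, $r=\sum_{i=R+1}^d p_i$, and set $\hat p_1=p_1+\epsilon$, $\hat p_i=p_i$ for $1<i<R$, $\hat p_R=p_R-(\epsilon-r)$, $\hat p_i=0$ for $i>R$; if $\epsilon>1-p_1$, set $\hat p_1=1$ and $\hat p_i=0$ for $i>1$. *)

theory Defs
  imports Complex_Main
begin

text \<open>Commuting states rho, sigma on a d-dimensional Hilbert space are represented by
  their eigenvalue vectors p, s in a common eigenbasis, indexed by 1..d (functions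
  nat => real; values outside 1..d are irrelevant).\<close>

definition rel_ent :: "nat \<Rightarrow> (nat \<Rightarrow> real) \<Rightarrow> (nat \<Rightarrow> real) \<Rightarrow> real" where
  "rel_ent d p s = (\<Sum>i=1..d. p i * (log 2 (p i) - log 2 (s i)))"

definition rel_var :: "nat \<Rightarrow> (nat \<Rightarrow> real) \<Rightarrow> (nat \<Rightarrow> real) \<Rightarrow> real" where
  "rel_var d p s = (\<Sum>i=1..d. p i * (log 2 (p i) - log 2 (s i))^2) - (rel_ent d p s)^2"

definition trace_dist :: "nat \<Rightarrow> (nat \<Rightarrow> real) \<Rightarrow> (nat \<Rightarrow> real) \<Rightarrow> real" where
  "trace_dist d p t = (1/2) * (\<Sum>i=1..d. \<bar>p i - t i\<bar>)"

text \<open>Lorenz curve of a diagonal state t relative to s: piecewise linear curve through the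
  points (sum_{i<=k} s(pi i), sum_{i<=k} t(pi i)), k = 0..d, where pi orders the indices so
  that t/s is non-increasing.\<close>

definition lorenz :: "nat \<Rightarrow> (nat \<Rightarrow> real) \<Rightarrow> (nat \<Rightarrow> real) \<Rightarrow> real \<Rightarrow> real" where
  "lorenz d s t x =
    (let \<pi> = (SOME \<pi>. bij_betw \<pi> {1..d} {1..d} \<and>
                  (\<forall>i j. 1 \<le> i \<longrightarrow> i \<le> j \<longrightarrow> j \<le> d \<longrightarrow>
                        t (\<pi> j) / s (\<pi> j) \<le> t (\<pi> i) / s (\<pi> i)));
         X = (\<lambda>k. \<Sum>i=1..k. s (\<pi> i));
         Y = (\<lambda>k. \<Sum>i=1..k. t (\<pi> i));
         k = (LEAST k. 1 \<le> k \<and> k \<le> d \<and> x \<le> X k)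
     in Y (k - 1) + (x - X (k - 1)) / (X k - X (k - 1)) * (Y k - Y (k - 1)))"

text \<open>Flat approximation (indices assumed ordered so that p i / s i is non-increasing).\<close>

definition flat_M :: "nat \<Rightarrow> (nat \<Rightarrow> real) \<Rightarrow> (nat \<Rightarrow> real) \<Rightarrow> real \<Rightarrow> nat" where
  "flat_M d p s \<epsilon> = (LEAST M. 1 \<le> M \<and> M \<le> d - 1 \<and>
      \<epsilon> \<le> (\<Sum>i=1..M. p i) - p (M+1) / s (M+1) * (\<Sum>i=1..M. s i))"

definition flat_N :: "nat \<Rightarrow> (nat \<Rightarrow> real) \<Rightarrow> (nat \<Rightarrow> real) \<Rightarrow> real \<Rightarrow> nat" where
  "flat_N d p s \<epsilon> = (GREATEST N. 2 \<le> N \<and> N \<le> d \<and>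
      \<epsilon> \<le> p (N-1) / s (N-1) * (\<Sum>i=N..d. s i) - (\<Sum>i=N..d. p i))"

definition flat_approx :: "nat \<Rightarrow> (nat \<Rightarrow> real) \<Rightarrow> (nat \<Rightarrow> real) \<Rightarrow> real \<Rightarrow> nat \<Rightarrow> real" where
  "flat_approx d p s \<epsilon> i =
    (if trace_dist d p s < \<epsilon> then s i
     else (let M = flat_M d p s \<epsilon>; N = flat_N d p s \<epsilon> in
       if i \<le> M then s i * ((\<Sum>j=1..M. p j) - \<epsilon>) / (\<Sum>j=1..M. s j)
       else if N \<le> i then s i * ((\<Sum>j=N..d. p j) + \<epsilon>) / (\<Sum>j=N..d. s j)
       else p i))"

definition steep_approx :: "nat \<Rightarrow> (nat \<Rightarrow> real) \<Rightarrow> real \<Rightarrow> nat \<Rightarrow> real" where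
  "steep_approx d p \<epsilon> i =
    (if \<epsilon> \<le> 1 - p 1 then
       (let R = (GREATEST R. 2 \<le> R \<and> R \<le> d \<and> \<epsilon> \<le> (\<Sum>j=R..d. p j));
            r = (\<Sum>j=R+1..d. p j) in
        if i = 1 then p 1 + \<epsilon>
        else if i < R then p i
        else if i = R then p R - (\<epsilon> - r)
        else 0)
     else (if i = 1 then 1 else 0))"

definition f_sigma :: "nat \<Rightarrow> (nat \<Rightarrow> real) \<Rightarrow> (nat \<Rightarrow> real) \<Rightarrow> real \<Rightarrow> real" where
  "f_sigma d p s \<epsilon> = sqrt (rel_var d p s * (1/\<epsilon> - 1))"

definition ell :: "real \<Rightarrow> real \<Rightarrow> real" where
  "ell c x = min (c * x) 1"

end

theory Submission
  imports Defs
begin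


lemma sort_perm_exists:
  fixes g :: "nat \<Rightarrow> real"
  shows "\<exists>\<pi>. bij_betw \<pi> {1..d} {1..d} \<and>
     (\<forall>i j. 1 \<le> i \<longrightarrow> i \<le> j \<longrightarrow> j \<le> d \<longrightarrow> g (\<pi> j) \<le> g (\<pi> i))"
proof -
  define ys where "ys = sort_key g [1..<Suc d]"
  define xs where "xs = rev ys"
  have len: "length xs = d" by (simp add: xs_def ys_def)
  have setx: "set xs = {1..d}" by (auto simp: xs_def ys_def)
  have dx: "distinct xs" by (simp add: xs_def ys_def)
  have sy: "sorted (map g ys)" by (simp add: ys_def)
  define \<pi> where "\<pi> = (\<lambda>i. xs ! (i - 1))"
  have inj: "inj_on \<pi> {1..d}"
  proof (rule inj_onI)
    fix i j assume "i \<in> {1..d}" "j \<in> {1..d}" "\<pi> i = \<pi> j"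
    then show "i = j" using dx len by (auto simp: \<pi>_def nth_eq_iff_index_eq)
  qed
  have img: "\<pi> ` {1..d} = {1..d}"
  proof
    show "\<pi> ` {1..d} \<subseteq> {1..d}" using len setx nth_mem[of _ xs] by (auto simp: \<pi>_def)
    show "{1..d} \<subseteq> \<pi> ` {1..d}"
    proof
      fix y assume "y \<in> {1..d}"
      then obtain n where n: "n < d" "xs ! n = y" using setx len by (metis in_set_conv_nth)
      then have "\<pi> (Suc n) = y" by (simp add: \<pi>_def)
      then show "y \<in> \<pi> ` {1..d}" using n by force
    qed
  qed
  have srt: "g (\<pi> j) \<le> g (\<pi> i)" if "1 \<le> i" "i \<le> j" "j \<le> d" for i j
  proof -
    have lys: "length ys = d" using len by (simp add: xs_def)
    have a: "\<pi> i = ys ! (d - i)" using that lys by (simp add: \<pi>_def xs_def rev_nth)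
    have b: "\<pi> j = ys ! (d - j)" using that lys by (simp add: \<pi>_def xs_def rev_nth)
    have "(map g ys) ! (d - j) \<le> (map g ys) ! (d - i)"
      using sy that lys by (intro sorted_nth_mono) auto
    then show ?thesis using a b that lys by simp
  qed
  show ?thesis using inj img srt by (intro exI[of _ \<pi>]) (auto simp: bij_betw_def)
qed

lemma lorenz_repr:
  fixes s t :: "nat \<Rightarrow> real"
  assumes d1: "d \<ge> 1" and spos: "\<forall>i\<in>{1..d}. 0 < s i" and ssum: "(\<Sum>i=1..d. s i) = 1"
    and x0: "0 \<le> x" and x1: "x \<le> 1"
  shows "\<exists>\<pi> k \<theta>. bij_betw \<pi> {1..d} {1..d} \<and>
     (\<forall>i j. 1 \<le> i \<longrightarrow> i \<le> j \<longrightarrow> j \<le> d \<longrightarrow> t (\<pi> j) / s (\<pi> j) \<le> t (\<pi> i) / s (\<pi> i)) \<and>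
     1 \<le> k \<and> k \<le> d \<and> 0 \<le> \<theta> \<and> \<theta> \<le> 1 \<and>
     x = (\<Sum>i=1..k-1. s (\<pi> i)) + \<theta> * s (\<pi> k) \<and>
     lorenz d s t x = (\<Sum>i=1..k-1. t (\<pi> i)) + \<theta> * t (\<pi> k)"
proof -
  define \<pi> where "\<pi> = (SOME \<pi>. bij_betw \<pi> {1..d} {1..d} \<and>
                  (\<forall>i j. 1 \<le> i \<longrightarrow> i \<le> j \<longrightarrow> j \<le> d \<longrightarrow>
                        t (\<pi> j) / s (\<pi> j) \<le> t (\<pi> i) / s (\<pi> i)))"
  have P: "bij_betw \<pi> {1..d} {1..d} \<and>
                  (\<forall>i j. 1 \<le> i \<longrightarrow> i \<le> j \<longrightarrow> j \<le> d \<longrightarrow>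
                        t (\<pi> j) / s (\<pi> j) \<le> t (\<pi> i) / s (\<pi> i))"
    unfolding \<pi>_def using sort_perm_exists[of d "\<lambda>i. t i / s i"] by (rule someI_ex)
  define X where "X = (\<lambda>k. \<Sum>i=1..k. s (\<pi> i))"
  define Y where "Y = (\<lambda>k. \<Sum>i=1..k. t (\<pi> i))"
  define k where "k = (LEAST k. 1 \<le> k \<and> k \<le> d \<and> x \<le> X k)"
  have L: "lorenz d s t x = Y (k - 1) + (x - X (k - 1)) / (X k - X (k - 1)) * (Y k - Y (k - 1))"
    unfolding lorenz_def Let_def \<pi>_def[symmetric] k_def X_def Y_def by (rule refl)
  have Xd: "X d = 1" unfolding X_def using sum.reindex_bij_betw[OF conjunct1[OF P], of s] ssum by simp
  have kp: "1 \<le> k \<and> k \<le> d \<and> x \<le> X k"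
    unfolding k_def by (rule LeastI[of _ d]) (use d1 x1 Xd in auto)
  have pik: "\<pi> k \<in> {1..d}" using kp P by (auto simp: bij_betw_def)
  have sk: "s (\<pi> k) > 0" using pik spos by auto
  have Xk: "X k = X (k-1) + s (\<pi> k)" unfolding X_def using kp
    by (cases k) auto
  have Yk: "Y k = Y (k-1) + t (\<pi> k)" unfolding Y_def using kp
    by (cases k) auto
  have Xlow: "X (k-1) \<le> x"
  proof (cases "k = 1")
    case True then show ?thesis using x0 by (simp add: X_def)
  next
    case False
    have "\<not> (1 \<le> k - 1 \<and> k - 1 \<le> d \<and> x \<le> X (k-1))"
      unfolding k_def by (rule not_less_Least) (use kp False in \<open>simp add: k_def\<close>)
    then show ?thesis using kp False by auto
  qed
  define \<theta> where "\<theta> = (x - X (k-1)) / s (\<pi> k)"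
  have th: "0 \<le> \<theta>" "\<theta> \<le> 1" using Xlow kp Xk sk by (auto simp: \<theta>_def divide_simps)
  have xe: "x = X (k-1) + \<theta> * s (\<pi> k)" using sk by (simp add: \<theta>_def)
  have le: "lorenz d s t x = Y (k-1) + \<theta> * t (\<pi> k)" using L Xk Yk by (simp add: \<theta>_def)
  show ?thesis
    apply (rule exI[of _ \<pi>], rule exI[of _ k], rule exI[of _ \<theta>])
    using P kp th xe le by (simp add: X_def Y_def)
qed

lemma sum_split_at:
  fixes f :: "nat \<Rightarrow> real"
  assumes "m \<le> k" "k \<le> Suc n"
  shows "sum f {m..n} = sum f {m..<k} + sum f {k..n}"
proof -
  have "{m..n} = {m..<k} \<union> {k..n}" using assms by auto
  then show ?thesis by (simp add: sum.union_disjoint ivl_disj_int)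
qed

lemma ivl_km1: "1 \<le> k \<Longrightarrow> {1..k-1} = {1..<(k::nat)}" by auto

lemma lorenz_upper:
  fixes s t :: "nat \<Rightarrow> real"
  assumes d1: "d \<ge> 1" and spos: "\<forall>i\<in>{1..d}. 0 < s i" and ssum: "(\<Sum>i=1..d. s i) = 1"
    and x0: "0 \<le> x" and x1: "x \<le> 1"
  shows "lorenz d s t x \<le> \<kappa> * x + (\<Sum>j=1..d. max (t j - \<kappa> * s j) 0)"
proof -
  obtain \<pi> k \<theta> where P: "bij_betw \<pi> {1..d} {1..d}"
     and k: "1 \<le> k" "k \<le> d" and th: "0 \<le> \<theta>" "\<theta> \<le> 1"
     and xe: "x = (\<Sum>i=1..k-1. s (\<pi> i)) + \<theta> * s (\<pi> k)"
     and le: "lorenz d s t x = (\<Sum>i=1..k-1. t (\<pi> i)) + \<theta> * t (\<pi> k)"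
    using lorenz_repr[OF d1 spos ssum x0 x1, of t] by blast
  define a where "a = (\<lambda>j. t j - \<kappa> * s j)"
  have "lorenz d s t x - \<kappa> * x = (\<Sum>i=1..<k. a (\<pi> i)) + \<theta> * a (\<pi> k)"
    using le[unfolded ivl_km1[OF k(1)]] xe[unfolded ivl_km1[OF k(1)]] by (simp add: a_def sum_subtractf sum_distrib_left algebra_simps)
  also have "\<dots> \<le> (\<Sum>i=1..<k. max (a (\<pi> i)) 0) + max (a (\<pi> k)) 0"
  proof (rule add_mono)
    show "(\<Sum>i=1..<k. a (\<pi> i)) \<le> (\<Sum>i=1..<k. max (a (\<pi> i)) 0)" by (rule sum_mono) simp
    show "\<theta> * a (\<pi> k) \<le> max (a (\<pi> k)) 0" using th
      by (cases "a (\<pi> k) \<ge> 0") (auto simp: mult_le_cancel_right1 mult_nonneg_nonpos intro: mult_left_le_one_le)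
  qed
  also have "\<dots> = (\<Sum>i=1..k. max (a (\<pi> i)) 0)"
    using k by (cases k) (auto simp: atLeastLessThanSuc_atLeastAtMost)
  also have "\<dots> \<le> (\<Sum>i=1..d. max (a (\<pi> i)) 0)"
    by (rule sum_mono2) (use k in auto)
  also have "\<dots> = (\<Sum>j=1..d. max (a j) 0)"
    using sum.reindex_bij_betw[OF P, of "\<lambda>j. max (a j) 0"] by simp
  finally show ?thesis by (simp add: a_def)
qed

lemma lorenz_lower:
  fixes s t w :: "nat \<Rightarrow> real"
  assumes d1: "d \<ge> 1" and spos: "\<forall>i\<in>{1..d}. 0 < s i" and ssum: "(\<Sum>i=1..d. s i) = 1"
    and x0: "0 \<le> x" and x1: "x \<le> 1"
    and w: "\<forall>j\<in>{1..d}. 0 \<le> w j \<and> w j \<le> 1" and ws: "(\<Sum>j=1..d. w j * s j) = x"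
  shows "(\<Sum>j=1..d. w j * t j) \<le> lorenz d s t x"
proof -
  obtain \<pi> k \<theta> where P: "bij_betw \<pi> {1..d} {1..d}"
     and srt: "\<forall>i j. 1 \<le> i \<longrightarrow> i \<le> j \<longrightarrow> j \<le> d \<longrightarrow> t (\<pi> j) / s (\<pi> j) \<le> t (\<pi> i) / s (\<pi> i)"
     and k: "1 \<le> k" "k \<le> d" and th: "0 \<le> \<theta>" "\<theta> \<le> 1"
     and xe: "x = (\<Sum>i=1..k-1. s (\<pi> i)) + \<theta> * s (\<pi> k)"
     and le: "lorenz d s t x = (\<Sum>i=1..k-1. t (\<pi> i)) + \<theta> * t (\<pi> k)"
    using lorenz_repr[OF d1 spos ssum x0 x1, of t] by blast
  have pin: "\<pi> i \<in> {1..d}" if "i \<in> {1..d}" for i using P that by (auto simp: bij_betw_def)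
  define \<rho> where "\<rho> = t (\<pi> k) / s (\<pi> k)"
  define a where "a = (\<lambda>j. t j - \<rho> * s j)"
  have sk: "s (\<pi> k) > 0" using pin[of k] k spos by auto
  have ak: "t (\<pi> k) = \<rho> * s (\<pi> k)" using sk by (simp add: \<rho>_def)
  have apos: "a (\<pi> i) \<ge> 0" if "1 \<le> i" "i < k" for i
  proof -
    have "\<rho> \<le> t (\<pi> i) / s (\<pi> i)" using srt that k by (auto simp: \<rho>_def)
    moreover have "s (\<pi> i) > 0" using pin[of i] that k spos by auto
    ultimately show ?thesis by (simp add: a_def pos_le_divide_eq)
  qed
  have aneg: "a (\<pi> i) \<le> 0" if "k \<le> i" "i \<le> d" for i
  proof -
    have "t (\<pi> i) / s (\<pi> i) \<le> \<rho>" using srt that k by (auto simp: \<rho>_def)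
    moreover have "s (\<pi> i) > 0" using pin[of i] that k spos by auto
    ultimately show ?thesis by (simp add: a_def pos_divide_le_eq)
  qed
  have lrep: "lorenz d s t x = (\<Sum>i=1..<k. a (\<pi> i)) + \<rho> * x"
    using le[unfolded ivl_km1[OF k(1)]] xe[unfolded ivl_km1[OF k(1)]] ak by (simp add: a_def sum_subtractf sum_distrib_left algebra_simps)
  have e1: "(\<Sum>j=1..d. w j * t j) = (\<Sum>j=1..d. w j * a j) + \<rho> * x"
  proof -
    have "(\<Sum>j=1..d. w j * t j) = (\<Sum>j=1..d. w j * a j + \<rho> * (w j * s j))"
      by (rule sum.cong) (auto simp: a_def algebra_simps)
    also have "\<dots> = (\<Sum>j=1..d. w j * a j) + \<rho> * (\<Sum>j=1..d. w j * s j)"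
      by (simp add: sum.distrib sum_distrib_left)
    finally show ?thesis using ws by simp
  qed
  have "(\<Sum>j=1..d. w j * a j) = (\<Sum>i=1..d. w (\<pi> i) * a (\<pi> i))"
    using sum.reindex_bij_betw[OF P, of "\<lambda>j. w j * a j"] by simp
  also have "\<dots> = (\<Sum>i=1..<k. w (\<pi> i) * a (\<pi> i)) + (\<Sum>i=k..d. w (\<pi> i) * a (\<pi> i))"
    by (rule sum_split_at) (use k in auto)
  also have "\<dots> \<le> (\<Sum>i=1..<k. a (\<pi> i)) + 0"
  proof (rule add_mono)
    show "(\<Sum>i=1..<k. w (\<pi> i) * a (\<pi> i)) \<le> (\<Sum>i=1..<k. a (\<pi> i))"
    proof (rule sum_mono)
      fix i assume i: "i \<in> {1..<k}"
      have "w (\<pi> i) \<le> 1" using w pin[of i] i k by auto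
      then show "w (\<pi> i) * a (\<pi> i) \<le> a (\<pi> i)" using mult_right_mono[of "w (\<pi> i)" 1 "a (\<pi> i)"] apos[of i] i by simp
    qed
    show "(\<Sum>i=k..d. w (\<pi> i) * a (\<pi> i)) \<le> 0"
    proof (rule sum_nonpos)
      fix i assume i: "i \<in> {k..d}"
      have "w (\<pi> i) \<ge> 0" using w pin[of i] i k by auto
      then show "w (\<pi> i) * a (\<pi> i) \<le> 0" using aneg[of i] i by (simp add: mult_nonneg_nonpos)
    qed
  qed
  finally show ?thesis using e1 lrep by simp
qed




locale L7 =
  fixes d :: nat and p s :: "nat \<Rightarrow> real" and \<epsilon> :: real
  assumes d1: "d \<ge> 1"
    and pnn: "\<forall>i\<in>{1..d}. 0 \<le> p i" and psum: "(\<Sum>i=1..d. p i) = 1"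
    and spos: "\<forall>i\<in>{1..d}. 0 < s i" and ssum: "(\<Sum>i=1..d. s i) = 1"
    and adj: "\<forall>i. 1 \<le> i \<and> i < d \<longrightarrow> p (i+1) / s (i+1) \<le> p i / s i"
    and e0: "0 < \<epsilon>" and e1: "\<epsilon> < 1"
begin

lemma mono_r: "1 \<le> i \<Longrightarrow> i \<le> j \<Longrightarrow> j \<le> d \<Longrightarrow> p j / s j \<le> p i / s i"
proof (induction j)
  case 0 then show ?case by simp
next
  case (Suc j)
  show ?case
  proof (cases "i = Suc j")
    case True then show ?thesis by simp
  next
    case False
    then have "i \<le> j" using Suc by simp
    then have "p j / s j \<le> p i / s i" using Suc by simp
    moreover have "p (j+1) / s (j+1) \<le> p j / s j" using adj Suc \<open>i \<le> j\<close> by simp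
    ultimately show ?thesis by simp
  qed
qed

lemma psum1[simp]: "sum p {Suc 0..d} = 1" using psum by simp
lemma ssum1[simp]: "sum s {Suc 0..d} = 1" using ssum by simp

lemma sp: "i \<in> {1..d} \<Longrightarrow> 0 < s i" using spos by auto
lemma pn: "i \<in> {1..d} \<Longrightarrow> 0 \<le> p i" using pnn by auto

lemma rd_le1: "p d / s d \<le> 1"
proof (rule ccontr)
  assume a: "\<not> p d / s d \<le> 1"
  have "s i < p i" if "i \<in> {1..d}" for i
  proof -
    have "1 < p i / s i" using mono_r[of i d] that a by auto
    then show ?thesis using sp[OF that] by (simp add: less_divide_eq)
  qed
  then have "(\<Sum>i=1..d. s i) < (\<Sum>i=1..d. p i)" using d1 by (intro sum_strict_mono) auto
  then show False using psum ssum by simp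
qed

lemma r1_ge1: "1 \<le> p 1 / s 1"
proof (rule ccontr)
  assume a: "\<not> 1 \<le> p 1 / s 1"
  have "p i < s i" if "i \<in> {1..d}" for i
  proof -
    have "p i / s i < 1" using mono_r[of 1 i] that a by auto
    then show ?thesis using sp[OF that] by (simp add: divide_less_eq)
  qed
  then have "(\<Sum>i=1..d. p i) < (\<Sum>i=1..d. s i)" using d1 by (intro sum_strict_mono) auto
  then show False using psum ssum by simp
qed

definition X :: "nat \<Rightarrow> real" where "X i = log 2 (p i) - log 2 (s i)"

lemma S_def': "rel_ent d p s = (\<Sum>i=1..d. p i * X i)" by (simp add: rel_ent_def X_def)
lemma SX1: "(\<Sum>i = Suc 0..d. p i * X i) = rel_ent d p s" using S_def' by simp

lemma V_form: "rel_var d p s = (\<Sum>i=1..d. p i * (X i - rel_ent d p s)^2)"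
proof -
  define S where "S = rel_ent d p s"
  have "(\<Sum>i=1..d. p i * (X i - S)^2) = (\<Sum>i=1..d. p i * (X i)^2 - 2 * S * (p i * X i) + S^2 * p i)"
    by (rule sum.cong) (auto simp: power2_eq_square algebra_simps)
  also have "\<dots> = (\<Sum>i=1..d. p i * (X i)^2) - 2 * S * (\<Sum>i=1..d. p i * X i) + S^2 * (\<Sum>i=1..d. p i)"
    by (simp add: sum.distrib sum_subtractf sum_distrib_left[symmetric])
  also have "\<dots> = (\<Sum>i=1..d. p i * (X i)^2) - 2 * S * S + S^2"
    by (simp add: S_def SX1 sum_distrib_left[symmetric])
  finally show ?thesis by (simp add: rel_var_def X_def[symmetric] S_def power2_eq_square)
qed

lemma V_nn: "0 \<le> rel_var d p s"
  unfolding V_form by (rule sum_nonneg) (use pnn in \<open>auto intro!: mult_nonneg_nonneg\<close>)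

lemma cantelli:
  fixes Z :: "nat \<Rightarrow> real" and A :: "nat set"
  assumes Z0: "(\<Sum>i=1..d. p i * Z i) = 0" and Z2: "(\<Sum>i=1..d. p i * (Z i)^2) = V"
    and A: "A \<subseteq> {1..d}"
    and big: "\<forall>i\<in>A. 0 < p i \<longrightarrow> sqrt (V * (1/\<epsilon> - 1)) < Z i"
  shows "(\<Sum>i\<in>A. p i) < \<epsilon>"
proof -
  have finA: "finite A" using A finite_subset by blast
  have V0: "0 \<le> V" unfolding Z2[symmetric] by (rule sum_nonneg) (use pnn in \<open>auto intro!: mult_nonneg_nonneg\<close>)
  define t where "t = sqrt (V * (1/\<epsilon> - 1))"
  have q: "0 < 1/\<epsilon> - 1" using e0 e1 by (simp add: field_simps)
  have t2: "t^2 = V * (1/\<epsilon> - 1)" unfolding t_def using V0 q by simp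
  have t0: "0 \<le> t" unfolding t_def using V0 q by simp
  show ?thesis
  proof (cases "\<exists>i\<in>A. 0 < p i")
    case False
    then have "(\<Sum>i\<in>A. p i) = 0" using A pn by (intro sum.neutral) (force simp: not_less)
    then show ?thesis using e0 by simp
  next
    case True
    then obtain i0 where i0: "i0 \<in> A" "0 < p i0" by blast
    show ?thesis
    proof (cases "V = 0")
      case True
      have "\<forall>i\<in>{1..d}. p i * (Z i)^2 = 0"
        using Z2 True pnn by (subst sum_nonneg_eq_0_iff[symmetric]) (auto intro!: mult_nonneg_nonneg)
      moreover have "i0 \<in> {1..d}" using i0 A by blast
      ultimately have "p i0 * (Z i0)^2 = 0" by blast
      moreover have "0 < Z i0" using big i0 True t_def by (simp add: t_def)
      ultimately show ?thesis using i0 by simp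
    next
      case False
      then have Vp: "0 < V" using V0 by simp
      then have tp: "0 < t" unfolding t_def using q by simp
      define u where "u = V / t"
      have up: "0 < u" using Vp tp by (simp add: u_def)
      have "(u + t)^2 * (\<Sum>i\<in>A. p i) = (\<Sum>i\<in>A. p i * (u + t)^2)"
        by (simp add: sum_distrib_right mult.commute)
      also have "\<dots> < (\<Sum>i\<in>A. p i * (u + Z i)^2)"
      proof (rule sum_strict_mono_ex1[OF finA])
        show "\<forall>i\<in>A. p i * (u + t)^2 \<le> p i * (u + Z i)^2"
        proof
          fix i assume i: "i \<in> A"
          show "p i * (u + t)^2 \<le> p i * (u + Z i)^2"
          proof (cases "p i = 0")
            case False
            then have "0 < p i" using pn[of i] i A by auto
            then have "t < Z i" using big i t_def by simp
            then have "(u + t)^2 \<le> (u + Z i)^2" using up t0 by (intro power_mono) auto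
            then show ?thesis using \<open>0 < p i\<close> by simp
          qed simp
        qed
        show "\<exists>i\<in>A. p i * (u + t)^2 < p i * (u + Z i)^2"
        proof (rule bexI[OF _ i0(1)])
          have "t < Z i0" using big i0 t_def by simp
          then have "(u + t)^2 < (u + Z i0)^2" using up t0 by (intro power_strict_mono) auto
          then show "p i0 * (u + t)^2 < p i0 * (u + Z i0)^2" using i0 by simp
        qed
      qed
      also have "\<dots> \<le> (\<Sum>i=1..d. p i * (u + Z i)^2)"
        by (rule sum_mono2) (use A pnn in \<open>auto intro!: mult_nonneg_nonneg\<close>)
      also have "\<dots> = (\<Sum>i=1..d. u^2 * p i + 2 * u * (p i * Z i) + p i * (Z i)^2)"
        by (rule sum.cong) (auto simp: power2_eq_square algebra_simps)
      also have "\<dots> = u^2 + V"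
        using Z0 Z2 by (simp add: sum.distrib sum_distrib_left[symmetric])
      also have "\<dots> = \<epsilon> * (u + t)^2"
      proof -
        have h: "V + t^2 = V / \<epsilon>" using t2 e0 by (simp add: field_simps)
        have "u + t = (V + t^2) / t" using tp by (simp add: u_def field_simps power2_eq_square)
        then have "\<epsilon> * (u + t)^2 = \<epsilon> * (V / \<epsilon>)^2 / t^2" using h by (simp add: power_divide power_mult_distrib)
        also have "\<dots> = V * (V / \<epsilon>) / t^2" using e0 by (simp add: power2_eq_square)
        also have "\<dots> = V * (V + t^2) / t^2" using h by simp
        also have "\<dots> = u^2 + V" using tp by (simp add: u_def field_simps power2_eq_square)
        finally show ?thesis by simp
      qed
      finally have "(u + t)^2 * (\<Sum>i\<in>A. p i) < (u + t)^2 * \<epsilon>" by (simp add: mult.commute)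
      then show ?thesis using up t0 by (simp add: mult_less_cancel_left_pos)
    qed
  qed
qed

lemma gibbs: "0 \<le> rel_ent d p s"
proof -
  have "(\<Sum>i=1..d. (p i - s i) / ln 2) \<le> rel_ent d p s"
    unfolding rel_ent_def
  proof (rule sum_mono)
    fix i assume i: "i \<in> {1..d}"
    have si: "0 < s i" using sp[OF i] .
    show "(p i - s i) / ln 2 \<le> p i * (log 2 (p i) - log 2 (s i))"
    proof (cases "p i = 0")
      case True then show ?thesis using si by simp
    next
      case False
      then have pi: "0 < p i" using pn[OF i] by simp
      have "ln (s i / p i) \<le> s i / p i - 1" using pi si by (intro ln_le_minus_one) simp
      then have "p i * ln (s i / p i) \<le> s i - p i" using pi
        by (simp add: field_simps)
      then have "p i - s i \<le> p i * (ln (p i) - ln (s i))" using pi si by (simp add: ln_div algebra_simps)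
      then have "(p i - s i) / ln 2 \<le> (p i * (ln (p i) - ln (s i))) / ln 2" by (rule divide_right_mono) simp
      moreover have "p i * (log 2 (p i) - log 2 (s i)) = (p i * (ln (p i) - ln (s i))) / ln 2"
        by (simp add: log_def field_simps)
      ultimately show ?thesis by simp
    qed
  qed
  moreover have "(\<Sum>i=1..d. (p i - s i) / ln 2) = 0"
    by (simp add: sum_divide_distrib[symmetric] sum_subtractf psum ssum)
  ultimately show ?thesis by simp
qed

lemma S_le_r1: "2 powr (rel_ent d p s) \<le> p 1 / s 1"
proof -
  have r1p: "0 < p 1 / s 1" using r1_ge1 by simp
  have "rel_ent d p s \<le> (\<Sum>i=1..d. p i * log 2 (p 1 / s 1))"
    unfolding rel_ent_def
  proof (rule sum_mono)
    fix i assume i: "i \<in> {1..d}"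
    show "p i * (log 2 (p i) - log 2 (s i)) \<le> p i * log 2 (p 1 / s 1)"
    proof (cases "p i = 0")
      case False
      then have pi: "0 < p i" using pn[OF i] by simp
      have "p i / s i \<le> p 1 / s 1" using mono_r[of 1 i] i by auto
      then have "log 2 (p i / s i) \<le> log 2 (p 1 / s 1)" using pi sp[OF i] r1p by simp
      then show ?thesis using pi sp[OF i] by (simp add: log_divide)
    qed simp
  qed
  also have "\<dots> = log 2 (p 1 / s 1)" by (simp add: sum_distrib_right[symmetric] psum)
  finally have h: "2 powr rel_ent d p s \<le> 2 powr log 2 (p 1 / s 1)" by (rule powr_mono) simp
  have "2 powr log 2 (p 1 / s 1) = p 1 / s 1" using r1p by simp
  then show ?thesis using h by linarith
qed

end



lemma lower_from_support:
  fixes s t :: "nat \<Rightarrow> real"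
  assumes d1: "d \<ge> 1" and spos: "\<forall>i\<in>{1..d}. 0 < s i" and ssum: "(\<Sum>i=1..d. s i) = 1"
    and R: "1 \<le> R" "R \<le> d"
    and tnn: "\<forall>j\<in>{1..d}. 0 \<le> t j" and tz: "\<forall>j\<in>{Suc R..d}. t j = 0"
    and tsum: "(\<Sum>j=1..R. t j) = 1" and c0: "0 \<le> c" and cS: "c * (\<Sum>j=1..R. s j) \<le> 1"
    and x0: "0 \<le> x" and x1: "x \<le> 1"
  shows "min (c * x) 1 \<le> lorenz d s t x"
proof -
  define SR where "SR = (\<Sum>j=1..R. s j)"
  have split: "(\<Sum>j=1..d. f j) = (\<Sum>j=1..R. f j) + (\<Sum>j=Suc R..d. f j)" for f :: "nat \<Rightarrow> real"
    using sum_split_at[of 1 "Suc R" d f] R by (simp add: atLeastLessThanSuc_atLeastAtMost)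
  have SRp: "0 < SR" unfolding SR_def using R spos by (intro sum_pos) auto
  have Srest: "(\<Sum>j=Suc R..d. s j) = 1 - SR" using split[of s] ssum by (simp add: SR_def)
  have trest: "(\<Sum>j=Suc R..d. t j) = 0" using tz by simp
  show ?thesis
  proof (cases "x \<le> SR")
    case True
    define w where "w = (\<lambda>j. if j \<le> R then x / SR else 0::real)"
    have w: "\<forall>j\<in>{1..d}. 0 \<le> w j \<and> w j \<le> 1" using True x0 SRp by (auto simp: w_def)
    have ws: "(\<Sum>j=1..d. w j * s j) = x"
    proof -
      have "(\<Sum>j=1..d. w j * s j) = (\<Sum>j=1..R. x / SR * s j) + (\<Sum>j=Suc R..d. 0)"
        unfolding split by (intro arg_cong2[where f="(+)"] sum.cong) (auto simp: w_def)
      also have "\<dots> = x / SR * SR" unfolding sum_distrib_left[symmetric] SR_def by simp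
      also have "\<dots> = x" using SRp by simp
      finally show ?thesis .
    qed
    have wt: "(\<Sum>j=1..d. w j * t j) = x / SR"
    proof -
      have "(\<Sum>j=1..d. w j * t j) = (\<Sum>j=1..R. x / SR * t j) + (\<Sum>j=Suc R..d. 0)"
        unfolding split by (intro arg_cong2[where f="(+)"] sum.cong) (auto simp: w_def)
      also have "\<dots> = x / SR" unfolding sum_distrib_left[symmetric] tsum by simp
      finally show ?thesis .
    qed
    have "c * x \<le> x / SR"
    proof -
      have "(c * SR) * x \<le> 1 * x" using cS x0 unfolding SR_def by (intro mult_right_mono) auto
      then have "c * x * SR \<le> x" by (simp add: algebra_simps)
      then show ?thesis using SRp by (simp add: le_divide_eq)
    qed
    then show ?thesis using lorenz_lower[OF d1 spos ssum x0 x1 w ws, of t] wt by simp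
  next
    case False
    then have S1: "SR < 1" using x1 by simp
    define w where "w = (\<lambda>j. if j \<le> R then 1 else (x - SR) / (1 - SR))"
    have w: "\<forall>j\<in>{1..d}. 0 \<le> w j \<and> w j \<le> 1" using False x1 S1 by (auto simp: w_def divide_simps)
    have ws: "(\<Sum>j=1..d. w j * s j) = x"
    proof -
      have "(\<Sum>j=1..d. w j * s j) = (\<Sum>j=1..R. s j) + (\<Sum>j=Suc R..d. (x - SR) / (1 - SR) * s j)"
        unfolding split by (intro arg_cong2[where f="(+)"] sum.cong) (auto simp: w_def)
      also have "\<dots> = SR + (x - SR) / (1 - SR) * (1 - SR)" unfolding sum_distrib_left[symmetric] Srest SR_def by simp
      also have "\<dots> = x" using S1 by simp
      finally show ?thesis .
    qed
    have wt: "(\<Sum>j=1..d. w j * t j) = 1"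
    proof -
      have "(\<Sum>j=1..d. w j * t j) = (\<Sum>j=1..R. t j) + (\<Sum>j=Suc R..d. 0)"
        unfolding split using tz by (intro arg_cong2[where f="(+)"] sum.cong) (auto simp: w_def)
      also have "\<dots> = 1" using tsum by simp
      finally show ?thesis .
    qed
    then show ?thesis using lorenz_lower[OF d1 spos ssum x0 x1 w ws, of t] by simp
  qed
qed

lemma upper_from_bounds:
  fixes s t :: "nat \<Rightarrow> real"
  assumes d1: "d \<ge> 1" and spos: "\<forall>i\<in>{1..d}. 0 < s i" and ssum: "(\<Sum>i=1..d. s i) = 1"
    and tnn: "\<forall>j\<in>{1..d}. 0 \<le> t j" and tsum: "(\<Sum>j=1..d. t j) = 1"
    and tb: "\<forall>j\<in>{1..d}. t j \<le> \<kappa> * s j"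
    and x0: "0 \<le> x" and x1: "x \<le> 1"
  shows "lorenz d s t x \<le> min (\<kappa> * x) 1"
proof -
  have a: "(\<Sum>j=1..d. max (t j - \<kappa> * s j) 0) = 0" using tb by (intro sum.neutral) auto
  have b: "(\<Sum>j=1..d. max (t j - 0 * s j) 0) = 1" using tnn tsum
    by (metis (no_types, lifting) diff_zero max.absorb1 mult_zero_left sum.cong)
  show ?thesis using lorenz_upper[OF d1 spos ssum x0 x1, of t \<kappa>] lorenz_upper[OF d1 spos ssum x0 x1, of t 0] a b
    by simp
qed




context L7 begin

lemma f_nn: "0 \<le> f_sigma d p s \<epsilon>"
proof -
  have "1 \<le> 1 / \<epsilon>" using e0 e1 by (simp add: field_simps)
  then have "0 \<le> rel_var d p s * (1 / \<epsilon> - 1)" using V_nn by (intro mult_nonneg_nonneg) auto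
  then show ?thesis unfolding f_sigma_def by simp
qed

lemma Zlow0: "(\<Sum>i=1..d. p i * (rel_ent d p s - X i)) = 0"
  by (simp add: right_diff_distrib sum_subtractf sum_distrib_right[symmetric] SX1)
lemma Zlow2: "(\<Sum>i=1..d. p i * (rel_ent d p s - X i)^2) = rel_var d p s"
  unfolding V_form by (rule sum.cong) (auto simp: power2_commute)
lemma Zup0: "(\<Sum>i=1..d. p i * (X i - rel_ent d p s)) = 0"
  by (simp add: right_diff_distrib sum_subtractf sum_distrib_right[symmetric] SX1)
lemma Zup2: "(\<Sum>i=1..d. p i * (X i - rel_ent d p s)^2) = rel_var d p s"
  unfolding V_form by simp

lemma X_eq: "i \<in> {1..d} \<Longrightarrow> 0 < p i \<Longrightarrow> X i = log 2 (p i / s i)"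
  using sp[of i] by (simp add: X_def log_divide)

lemma steep_case1:
  assumes ep: "\<epsilon> \<le> 1 - p 1" and x: "x \<in> {0..1}"
  shows "ell (2 powr (rel_ent d p s - f_sigma d p s \<epsilon>)) x \<le> lorenz d s (steep_approx d p \<epsilon>) x"
proof -
  define S where "S = rel_ent d p s"
  define f where "f = f_sigma d p s \<epsilon>"
  define c where "c = 2 powr (S - f)"
  have cp: "0 < c" by (simp add: c_def)
  have d2: "2 \<le> d"
  proof (rule ccontr)
    assume "\<not> 2 \<le> d" then have "d = 1" using d1 by simp
    then show False using psum ep e0 by simp
  qed
  have sum1: "(\<Sum>j=1..d. g j) = g 1 + (\<Sum>j=2..d. g j)" for g :: "nat \<Rightarrow> real"
    using d1 sum.atLeast_Suc_atMost[of 1 d g] by (simp add: numeral_2_eq_2)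
  define Q where "Q = (\<lambda>R. 2 \<le> R \<and> R \<le> d \<and> \<epsilon> \<le> (\<Sum>j=R..d. p j))"
  define R where "R = (GREATEST R. 2 \<le> R \<and> R \<le> d \<and> \<epsilon> \<le> (\<Sum>j=R..d. p j))"
  have Q2: "Q 2" unfolding Q_def using d2 ep sum1[of p] psum by simp
  have QR: "Q R" unfolding R_def Q_def[symmetric] by (rule GreatestI_nat[of Q 2 d, OF Q2]) (auto simp: Q_def)
  have Rmax: "\<not> Q R'" if "R < R'" for R'
  proof
    assume "Q R'"
    then have "R' \<le> R" unfolding R_def Q_def[symmetric] by (rule Greatest_le_nat[of Q R' d]) (auto simp: Q_def)
    then show False using that by simp
  qed
  have R2: "2 \<le> R" "R \<le> d" and Rtail: "\<epsilon> \<le> (\<Sum>j=R..d. p j)" using QR by (auto simp: Q_def)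
  define r where "r = (\<Sum>j=R+1..d. p j)"
  have rlt: "r < \<epsilon>"
  proof (cases "R < d")
    case True
    then show ?thesis using Rmax[of "R+1"] R2 by (auto simp: Q_def r_def)
  next
    case False then have "R = d" using R2 by simp
    then show ?thesis using e0 by (simp add: r_def)
  qed
  have tailR: "(\<Sum>j=R..d. p j) = p R + r" unfolding r_def using R2 sum.atLeast_Suc_atMost[of R d p] by simp
  have pR: "0 < p R" using tailR Rtail rlt by simp
  have steq: "steep_approx d p \<epsilon> i = (if i = 1 then p 1 + \<epsilon> else if i < R then p i
      else if i = R then p R - (\<epsilon> - r) else 0)" for i
    unfolding steep_approx_def Let_def R_def[symmetric] r_def[symmetric] using ep by simp
  have rR: "c \<le> p R / s R"
  proof (rule ccontr)
    assume a: "\<not> c \<le> p R / s R"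
    have "(\<Sum>i\<in>{R..d}. p i) < \<epsilon>"
    proof (rule cantelli[OF Zlow0 Zlow2])
      show "{R..d} \<subseteq> {1..d}" using R2 by auto
      show "\<forall>i\<in>{R..d}. 0 < p i \<longrightarrow> sqrt (rel_var d p s * (1 / \<epsilon> - 1)) < rel_ent d p s - X i"
      proof (intro ballI impI)
        fix i assume i: "i \<in> {R..d}" and pi: "0 < p i"
        have i1: "i \<in> {1..d}" using i R2 by auto
        have "p i / s i \<le> p R / s R" using mono_r[of R i] i R2 by auto
        then have lt: "p i / s i < c" using a by simp
        have "log 2 (p i / s i) < log 2 c" using lt pi sp[OF i1] cp by simp
        then have "X i < S - f" using X_eq[OF i1 pi] by (simp add: c_def)
        then show "sqrt (rel_var d p s * (1 / \<epsilon> - 1)) < rel_ent d p s - X i"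
          by (simp add: S_def f_def f_sigma_def)
      qed
    qed
    then show False using Rtail by simp
  qed
  have cs: "c * s i \<le> p i" if "i \<in> {1..R}" for i
  proof -
    have i1: "i \<in> {1..d}" using that R2 by auto
    have "c \<le> p i / s i" using rR mono_r[of i R] that R2 by auto
    then show ?thesis using sp[OF i1] by (simp add: le_divide_eq)
  qed
  have split: "(\<Sum>j=1..d. g j) = (\<Sum>j=1..R. g j) + (\<Sum>j=Suc R..d. g j)" for g :: "nat \<Rightarrow> real"
    using sum_split_at[of 1 "Suc R" d g] R2 by (simp add: atLeastLessThanSuc_atLeastAtMost)
  have cS: "c * (\<Sum>j=1..R. s j) \<le> 1"
  proof -
    have "c * (\<Sum>j=1..R. s j) = (\<Sum>j=1..R. c * s j)" by (simp add: sum_distrib_left)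
    also have "\<dots> \<le> (\<Sum>j=1..R. p j)" by (rule sum_mono) (use cs in auto)
    also have "\<dots> \<le> (\<Sum>j=1..d. p j)" by (rule sum_mono2) (use R2 pnn in auto)
    finally show ?thesis using psum by simp
  qed
  have tnn: "\<forall>j\<in>{1..d}. 0 \<le> steep_approx d p \<epsilon> j"
    using pnn e0 tailR Rtail by (auto simp: steq)
  have tz: "\<forall>j\<in>{Suc R..d}. steep_approx d p \<epsilon> j = 0" using R2 by (auto simp: steq)
  have tsum: "(\<Sum>j=1..R. steep_approx d p \<epsilon> j) = 1"
  proof -
    have "(\<Sum>j=1..R. steep_approx d p \<epsilon> j) =
        (\<Sum>j=1..R. p j + (if j = 1 then \<epsilon> else 0) - (if j = R then \<epsilon> - r else 0))"
      using R2 by (intro sum.cong) (auto simp: steq)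
    also have "\<dots> = (\<Sum>j=1..R. p j) + \<epsilon> - (\<epsilon> - r)"
      using R2 by (simp add: sum.distrib sum_subtractf)
    also have "\<dots> = (\<Sum>j=1..R. p j) + r" by simp
    also have "\<dots> = 1" using split[of p] psum by (simp add: r_def)
    finally show ?thesis .
  qed
  have "min (c * x) 1 \<le> lorenz d s (steep_approx d p \<epsilon>) x"
    using lower_from_support[OF d1 spos ssum _ R2(2) tnn tz tsum _ cS] R2 x cp by auto
  then show ?thesis by (simp add: ell_def c_def S_def f_def)
qed

lemma steep_case2:
  assumes ep: "\<not> \<epsilon> \<le> 1 - p 1" and x: "x \<in> {0..1}"
  shows "ell (2 powr (rel_ent d p s - f_sigma d p s \<epsilon>)) x \<le> lorenz d s (steep_approx d p \<epsilon>) x"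
proof -
  define c where "c = 2 powr (rel_ent d p s - f_sigma d p s \<epsilon>)"
  have cp: "0 < c" by (simp add: c_def)
  have "c \<le> 2 powr rel_ent d p s" unfolding c_def using f_nn by (intro powr_mono) auto
  then have cr: "c \<le> p 1 / s 1" using S_le_r1 by linarith
  have s1: "0 < s 1" using sp[of 1] d1 by simp
  have p1: "p 1 \<le> 1"
  proof -
    have "(\<Sum>j\<in>{1}. p j) \<le> (\<Sum>j=1..d. p j)" by (rule sum_mono2) (use d1 pnn in auto)
    then show ?thesis using psum by simp
  qed
  have cS: "c * (\<Sum>j=1..1. s j) \<le> 1" using cr s1 p1 by (simp add: le_divide_eq)
  have steq: "steep_approx d p \<epsilon> i = (if i = 1 then 1 else 0)" for i
    unfolding steep_approx_def using ep by simp
  have "min (c * x) 1 \<le> lorenz d s (steep_approx d p \<epsilon>) x"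
    using lower_from_support[OF d1 spos ssum _ d1, of "steep_approx d p \<epsilon>" c] cS x cp
    by (auto simp: steq)
  then show ?thesis by (simp add: ell_def c_def)
qed

end



context L7 begin

lemma split_at_m: "m \<le> d \<Longrightarrow> (\<Sum>j=1..d. g j) = (\<Sum>j=1..m. g j) + (\<Sum>j=Suc m..d. g j)"
  for g :: "nat \<Rightarrow> real"
  using sum_split_at[of 1 "Suc m" d g] by (simp add: atLeastLessThanSuc_atLeastAtMost)

lemma D_pos: "trace_dist d p s = (\<Sum>i=1..d. max (p i - s i) 0)"
  and D_neg: "trace_dist d p s = (\<Sum>i=1..d. max (s i - p i) 0)"
proof -
  have a: "(\<Sum>i=1..d. \<bar>p i - s i\<bar>) = (\<Sum>i=1..d. max (p i - s i) 0) + (\<Sum>i=1..d. max (s i - p i) 0)"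
    by (simp add: sum.distrib[symmetric]) (rule sum.cong, auto)
  have b: "(\<Sum>i=1..d. max (p i - s i) 0) - (\<Sum>i=1..d. max (s i - p i) 0) = 0"
  proof -
    have "(\<Sum>i=1..d. max (p i - s i) 0) - (\<Sum>i=1..d. max (s i - p i) 0) = (\<Sum>i=1..d. p i - s i)"
      by (simp add: sum_subtractf[symmetric]) (rule sum.cong, auto)
    also have "\<dots> = 0" by (simp add: sum_subtractf)
    finally show ?thesis .
  qed
  show "trace_dist d p s = (\<Sum>i=1..d. max (p i - s i) 0)" using a b by (simp add: trace_dist_def)
  show "trace_dist d p s = (\<Sum>i=1..d. max (s i - p i) 0)" using a b by (simp add: trace_dist_def)
qed

lemma Dle_H:
  assumes m: "m \<le> d" and k1: "\<kappa> \<le> 1" and lo: "\<forall>i\<in>{1..m}. \<kappa> \<le> p i / s i"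
    and hi: "\<forall>i\<in>{Suc m..d}. p i / s i \<le> 1"
  shows "trace_dist d p s \<le> (\<Sum>i=1..m. p i - \<kappa> * s i)"
proof -
  have "trace_dist d p s = (\<Sum>i=1..m. max (p i - s i) 0) + (\<Sum>i=Suc m..d. max (p i - s i) 0)"
    using D_pos split_at_m[OF m] by simp
  also have "(\<Sum>i=Suc m..d. max (p i - s i) 0) = 0"
  proof (rule sum.neutral, rule ballI)
    fix i assume i: "i \<in> {Suc m..d}"
    have "p i / s i \<le> 1" using hi i by blast
    then have "p i \<le> s i" using i sp[of i] by (auto simp: divide_le_eq)
    then show "max (p i - s i) 0 = 0" by simp
  qed
  also have "(\<Sum>i=1..m. max (p i - s i) 0) \<le> (\<Sum>i=1..m. p i - \<kappa> * s i)"
  proof (rule sum_mono)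
    fix i assume i: "i \<in> {1..m}"
    have si: "0 < s i" using sp[of i] i m by auto
    have "\<kappa> * s i \<le> p i" using lo i si by (auto simp: le_divide_eq)
    moreover have "\<kappa> * s i \<le> s i" using k1 si by simp
    ultimately show "max (p i - s i) 0 \<le> p i - \<kappa> * s i" by simp
  qed
  finally show ?thesis by simp
qed

lemma Dle_G:
  assumes m: "m \<le> d" and k1: "1 \<le> \<kappa>" and hi: "\<forall>i\<in>{Suc m..d}. p i / s i \<le> \<kappa>"
    and lo: "\<forall>i\<in>{1..m}. 1 \<le> p i / s i"
  shows "trace_dist d p s \<le> (\<Sum>i=Suc m..d. \<kappa> * s i - p i)"
proof -
  have "trace_dist d p s = (\<Sum>i=1..m. max (s i - p i) 0) + (\<Sum>i=Suc m..d. max (s i - p i) 0)"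
    using D_neg split_at_m[OF m] by simp
  also have "(\<Sum>i=1..m. max (s i - p i) 0) = 0"
  proof (rule sum.neutral, rule ballI)
    fix i assume i: "i \<in> {1..m}"
    have "1 \<le> p i / s i" using lo i by blast
    then have "s i \<le> p i" using i sp[of i] m by (auto simp: le_divide_eq)
    then show "max (s i - p i) 0 = 0" by simp
  qed
  also have "(\<Sum>i=Suc m..d. max (s i - p i) 0) \<le> (\<Sum>i=Suc m..d. \<kappa> * s i - p i)"
  proof (rule sum_mono)
    fix i assume i: "i \<in> {Suc m..d}"
    have si: "0 < s i" using sp[of i] i m by auto
    have "p i \<le> \<kappa> * s i" using hi i si by (auto simp: divide_le_eq)
    moreover have "s i \<le> \<kappa> * s i" using k1 si by simp
    ultimately show "max (s i - p i) 0 \<le> \<kappa> * s i - p i" by simp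
  qed
  finally show ?thesis by simp
qed

lemma flat_main:
  assumes Dge: "\<not> trace_dist d p s < \<epsilon>" and x: "x \<in> {0..1}"
  shows "lorenz d s (flat_approx d p s \<epsilon>) x \<le> ell (2 powr (rel_ent d p s + f_sigma d p s \<epsilon>)) x"
proof -
  define S where "S = rel_ent d p s"
  define f where "f = f_sigma d p s \<epsilon>"
  define c where "c = 2 powr (S + f)"
  have cp: "0 < c" by (simp add: c_def)
  have c1: "1 \<le> c" unfolding c_def using gibbs f_nn by (intro ge_one_powr_ge_zero) (auto simp: S_def f_def)
  define D where "D = trace_dist d p s"
  have De: "\<epsilon> \<le> D" using Dge by (simp add: D_def)
  have d2: "2 \<le> d"
  proof (rule ccontr)
    assume "\<not> 2 \<le> d" then have "d = 1" using d1 by simp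
    then have "D = 0" using psum ssum by (simp add: D_def trace_dist_def)
    then show False using De e0 by simp
  qed
  define r where "r = (\<lambda>i. p i / s i)"
  have rr: "p i / s i = r i" for i by (simp add: r_def)
  have rmono: "r j \<le> r i" if "1 \<le> i" "i \<le> j" "j \<le> d" for i j using mono_r that by (simp add: r_def)
  have rnn: "0 \<le> r i" if "i \<in> {1..d}" for i using pn[OF that] sp[OF that] by (simp add: r_def)
  have ps: "p i = r i * s i" if "i \<in> {1..d}" for i using sp[OF that] by (simp add: r_def)
  define P where "P = (\<lambda>m. \<Sum>i=1..m. p i)"
  define SS where "SS = (\<lambda>m. \<Sum>i=1..m. s i)"
  define T where "T = (\<lambda>n. \<Sum>i=n..d. p i)"
  define U where "U = (\<lambda>n. \<Sum>i=n..d. s i)"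
  define QM where "QM = (\<lambda>M. 1 \<le> M \<and> M \<le> d - 1 \<and>
      \<epsilon> \<le> (\<Sum>i=1..M. p i) - p (M+1) / s (M+1) * (\<Sum>i=1..M. s i))"
  define QN where "QN = (\<lambda>N. 2 \<le> N \<and> N \<le> d \<and>
      \<epsilon> \<le> p (N-1) / s (N-1) * (\<Sum>i=N..d. s i) - (\<Sum>i=N..d. p i))"
  define M where "M = flat_M d p s \<epsilon>"
  define N where "N = flat_N d p s \<epsilon>"
  have Hform: "(\<Sum>i=1..m. p i) - \<kappa> * (\<Sum>i=1..m. s i) = (\<Sum>i=1..m. p i - \<kappa> * s i)" for m \<kappa>
    by (simp add: sum_subtractf sum_distrib_left)
  have Gform: "\<kappa> * (\<Sum>i=n..d. s i) - (\<Sum>i=n..d. p i) = (\<Sum>i=n..d. \<kappa> * s i - p i)" for n \<kappa>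
    by (simp add: sum_subtractf sum_distrib_left)
  have QMd: "QM (d - 1)"
  proof -
    have "D \<le> (\<Sum>i=1..d-1. p i - r d * s i)"
      unfolding D_def
    proof (rule Dle_H)
      show "d - 1 \<le> d" by simp
      show "r d \<le> 1" using rd_le1 by (simp add: r_def)
      show "\<forall>i\<in>{1..d - 1}. r d \<le> p i / s i" using rmono by (auto simp: rr)
      show "\<forall>i\<in>{Suc (d - 1)..d}. p i / s i \<le> 1" using rd_le1 d2 by auto
    qed
    then show ?thesis unfolding QM_def using d2 De Hform[of "d-1" "r d"] by (simp add: r_def)
  qed
  have QMM: "QM M" unfolding M_def flat_M_def QM_def[symmetric] by (rule LeastI[of QM, OF QMd])
  have Mmin: "\<not> QM m" if "m < M" for m
    using not_less_Least[of m QM] that unfolding M_def flat_M_def QM_def[symmetric] by blast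
  have M1: "1 \<le> M" "M \<le> d - 1" and HM: "\<epsilon> \<le> P M - r (M+1) * SS M"
    using QMM by (auto simp: QM_def P_def SS_def r_def)
  have QNM: "QN (M+1)"
  proof (cases "1 \<le> r M")
    case True
    have "D \<le> (\<Sum>i=Suc M..d. r M * s i - p i)"
      unfolding D_def
    proof (rule Dle_G)
      show "M \<le> d" using M1 by simp
      show "1 \<le> r M" by fact
      show "\<forall>i\<in>{Suc M..d}. p i / s i \<le> r M" using rmono M1 by (auto simp: rr)
      show "\<forall>i\<in>{1..M}. 1 \<le> p i / s i"
      proof
        fix i assume i: "i \<in> {1..M}"
        have "r M \<le> r i" using rmono[of i M] i M1 by auto
        then show "1 \<le> p i / s i" using True by (simp add: rr)
      qed
    qed
    then show ?thesis unfolding QN_def using M1 d2 De Gform[of "r M" "M+1"] by (simp add: r_def)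
  next
    case False
    have M2: "2 \<le> M"
    proof (rule ccontr)
      assume "\<not> 2 \<le> M" then have "M = 1" using M1 by simp
      then show False using False r1_ge1 by (simp add: r_def)
    qed
    have "\<not> QM (M - 1)" using Mmin M2 by simp
    moreover have h1: "1 \<le> M - 1" "M - 1 \<le> d - 1" using M1 M2 by auto
    ultimately have lt: "(\<Sum>i=1..M-1. p i - r M * s i) < \<epsilon>"
      using M1 M2 Hform[of "M-1" "r M"] by (simp add: QM_def r_def)
    have "D \<le> (\<Sum>i=1..M-1. p i - r M * s i)"
      unfolding D_def
    proof (rule Dle_H)
      show "M - 1 \<le> d" using M1 by simp
      show "r M \<le> 1" using False by simp
      show "\<forall>i\<in>{1..M-1}. r M \<le> p i / s i" using rmono M1 by (auto simp: rr)
      show "\<forall>i\<in>{Suc (M-1)..d}. p i / s i \<le> 1"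
      proof
        fix i assume i: "i \<in> {Suc (M-1)..d}"
        have "r i \<le> r M" using rmono[of M i] i M1 M2 by auto
        then show "p i / s i \<le> 1" using False by (simp add: rr)
      qed
    qed
    then show ?thesis using lt De by simp
  qed
  have QNN: "QN N" unfolding N_def flat_N_def QN_def[symmetric]
    by (rule GreatestI_nat[of QN "M+1" d, OF QNM]) (auto simp: QN_def)
  have NM: "M + 1 \<le> N" unfolding N_def flat_N_def QN_def[symmetric]
    by (rule Greatest_le_nat[of QN "M+1" d, OF QNM]) (auto simp: QN_def)
  have Nmax: "\<not> QN n" if "N < n" for n
  proof
    assume "QN n"
    then have "n \<le> N" unfolding N_def flat_N_def QN_def[symmetric]
      by (rule Greatest_le_nat[of QN n d]) (auto simp: QN_def)
    then show False using that by simp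
  qed
  have N2: "2 \<le> N" "N \<le> d" and GN: "\<epsilon> \<le> r (N-1) * U N - T N"
    using QNN by (auto simp: QN_def T_def U_def r_def)
  define lam where "lam = (P M - \<epsilon>) / SS M"
  define \<mu> where "\<mu> = (T N + \<epsilon>) / U N"
  have SMp: "0 < SS M" unfolding SS_def using M1 spos by (intro sum_pos) auto
  have UNp: "0 < U N" unfolding U_def using N2 spos by (intro sum_pos) auto
  have TNn: "0 \<le> T N" unfolding T_def using N2 pnn by (intro sum_nonneg) auto
  have lam_ge: "r (M+1) \<le> lam" unfolding lam_def using HM SMp by (simp add: le_divide_eq)
  have "M + 1 \<in> {1..d}" using M1 by auto
  then have lam0: "0 \<le> lam" using lam_ge rnn[of "M+1"] by linarith
  have mu0: "0 \<le> \<mu>" unfolding \<mu>_def using TNn UNp e0 by simp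
  have mu_le: "\<mu> \<le> r (N-1)" unfolding \<mu>_def using GN UNp by (simp add: divide_le_eq)
  have lam_c: "lam \<le> c"
  proof (rule ccontr)
    assume a: "\<not> lam \<le> c"
    define B where "B = {i\<in>{1..d}. c < r i}"
    have PB: "(\<Sum>i\<in>B. p i) < \<epsilon>"
    proof (rule cantelli[OF Zup0 Zup2])
      show "B \<subseteq> {1..d}" by (auto simp: B_def)
      show "\<forall>i\<in>B. 0 < p i \<longrightarrow> sqrt (rel_var d p s * (1 / \<epsilon> - 1)) < X i - rel_ent d p s"
      proof (intro ballI impI)
        fix i assume i: "i \<in> B" and pi: "0 < p i"
        have i1: "i \<in> {1..d}" and lt: "c < p i / s i" using i by (auto simp: B_def r_def)
        have "log 2 c < log 2 (p i / s i)" using lt pi sp[OF i1] cp by simp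
        then have "S + f < X i" using X_eq[OF i1 pi] by (simp add: c_def)
        then show "sqrt (rel_var d p s * (1 / \<epsilon> - 1)) < X i - rel_ent d p s"
          by (simp add: S_def f_def f_sigma_def)
      qed
    qed
    have "\<epsilon> = P M - lam * SS M" using SMp by (simp add: lam_def)
    also have "\<dots> < P M - c * SS M" using a SMp by simp
    also have "\<dots> = (\<Sum>i=1..M. p i - c * s i)" using Hform by (simp add: P_def SS_def)
    also have "\<dots> \<le> (\<Sum>i=1..M. max (p i - c * s i) 0)" by (rule sum_mono) simp
    also have "\<dots> \<le> (\<Sum>i=1..d. max (p i - c * s i) 0)" by (rule sum_mono2) (use M1 in auto)
    also have "\<dots> \<le> (\<Sum>i=1..d. if c < r i then p i else 0)"
    proof (rule sum_mono)
      fix i assume i: "i \<in> {1..d}"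
      show "max (p i - c * s i) 0 \<le> (if c < r i then p i else 0)"
      proof (cases "c < r i")
        case True then show ?thesis using pn[OF i] sp[OF i] cp by simp
      next
        case False
        then have "p i / s i \<le> c" by (simp add: r_def)
        then have "p i \<le> c * s i" using sp[OF i] by (simp add: divide_le_eq)
        then show ?thesis using False by simp
      qed
    qed
    also have "\<dots> = (\<Sum>i\<in>B. p i)" unfolding B_def by (rule sum.inter_filter[symmetric]) simp
    finally show False using PB by simp
  qed
  have mu1: "\<mu> \<le> 1"
  proof (rule ccontr)
    assume a: "\<not> \<mu> \<le> 1"
    then have UT: "U N - T N < \<epsilon>" using UNp by (simp add: \<mu>_def field_simps)
    have big: "1 < r i" if "i \<in> {1..N-1}" for i
    proof -
      have "r (N-1) \<le> r i" using rmono[of i "N-1"] that N2 by auto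
      then show ?thesis using mu_le a by linarith
    qed
    show False
    proof (cases "r N \<le> 1")
      case True
      have "D \<le> (\<Sum>i=Suc (N-1)..d. 1 * s i - p i)"
        unfolding D_def
      proof (rule Dle_G)
        show "N - 1 \<le> d" using N2 by simp
        show "(1::real) \<le> 1" by simp
        show "\<forall>i\<in>{Suc (N-1)..d}. p i / s i \<le> 1"
        proof
          fix i assume i: "i \<in> {Suc (N-1)..d}"
          have "r i \<le> r N" using rmono[of N i] i N2 by auto
          then show "p i / s i \<le> 1" using True by (simp add: rr)
        qed
        show "\<forall>i\<in>{1..N-1}. 1 \<le> p i / s i" using big by (auto simp: rr less_imp_le)
      qed
      also have "\<dots> = U N - T N" using N2 by (simp add: U_def T_def sum_subtractf)
      finally show False using UT De by simp
    next
      case False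
      show False
      proof (cases "N < d")
        case True
        have "\<not> QN (N+1)" using Nmax by simp
        then have lt: "r N * U (N+1) - T (N+1) < \<epsilon>" using N2 True by (simp add: QN_def r_def U_def T_def)
        have "D \<le> (\<Sum>i=Suc N..d. r N * s i - p i)"
          unfolding D_def
        proof (rule Dle_G)
          show "N \<le> d" using N2 by simp
          show "1 \<le> r N" using False by simp
          show "\<forall>i\<in>{Suc N..d}. p i / s i \<le> r N" using rmono N2 by (auto simp: rr)
          show "\<forall>i\<in>{1..N}. 1 \<le> p i / s i"
          proof
            fix i assume i: "i \<in> {1..N}"
            have "r N \<le> r i" using rmono[of i N] i N2 by auto
            then show "1 \<le> p i / s i" using \<open>\<not> r N \<le> 1\<close> by (simp add: rr)
          qed
        qed
        also have "\<dots> = r N * U (N+1) - T (N+1)" using Gform by (simp add: U_def T_def)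
        finally show False using lt De by simp
      next
        case False
        then have "N = d" using N2 by simp
        then show False using \<open>\<not> r N \<le> 1\<close> rd_le1 by (simp add: r_def)
      qed
    qed
  qed
  define t where "t = flat_approx d p s \<epsilon>"
  have teq: "t i = (if i \<le> M then lam * s i else if N \<le> i then \<mu> * s i else p i)" for i
    unfolding t_def flat_approx_def Let_def M_def[symmetric] N_def[symmetric] using Dge
    by (simp add: lam_def \<mu>_def P_def SS_def T_def U_def)
  have tnn: "\<forall>j\<in>{1..d}. 0 \<le> t j" using lam0 mu0 pnn spos by (auto simp: teq less_imp_le)
  have tb: "\<forall>j\<in>{1..d}. t j \<le> c * s j"
  proof
    fix j assume j: "j \<in> {1..d}"
    have sj: "0 < s j" using sp[OF j] .
    show "t j \<le> c * s j"
    proof (cases "j \<le> M")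
      case True then show ?thesis using lam_c sj by (simp add: teq)
    next
      case False
      show ?thesis
      proof (cases "N \<le> j")
        case True
        then have "\<mu> \<le> c" using mu1 c1 by simp
        then show ?thesis using True False sj by (simp add: teq)
      next
        case nN: False
        have "r j \<le> r (M+1)" using rmono[of "M+1" j] False j by auto
        then have "r j \<le> c" using lam_ge lam_c by simp
        then have "p j \<le> c * s j" using sj by (simp add: r_def divide_le_eq)
        then show ?thesis using False nN by (simp add: teq)
      qed
    qed
  qed
  have tsum: "(\<Sum>j=1..d. t j) = 1"
  proof -
    have sp3: "(\<Sum>j=1..d. g j) = (\<Sum>j=1..M. g j) + (\<Sum>j=Suc M..<N. g j) + (\<Sum>j=N..d. g j)"
      for g :: "nat \<Rightarrow> real"
      using split_at_m[of M g] sum_split_at[of "Suc M" N d g] M1 NM N2 by simp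
    have "(\<Sum>j=1..d. t j) = (\<Sum>j=1..M. lam * s j) + (\<Sum>j=Suc M..<N. p j) + (\<Sum>j=N..d. \<mu> * s j)"
      unfolding sp3 using NM by (intro arg_cong2[where f="(+)"] sum.cong) (auto simp: teq)
    also have "\<dots> = (P M - \<epsilon>) + (\<Sum>j=Suc M..<N. p j) + (T N + \<epsilon>)"
    proof -
      have "(\<Sum>j=1..M. lam * s j) = lam * SS M" unfolding SS_def by (simp add: sum_distrib_left)
      also have "\<dots> = P M - \<epsilon>" using SMp by (simp add: lam_def)
      finally have a1: "(\<Sum>j=1..M. lam * s j) = P M - \<epsilon>" .
      have "(\<Sum>j=N..d. \<mu> * s j) = \<mu> * U N" unfolding U_def by (simp add: sum_distrib_left)
      also have "\<dots> = T N + \<epsilon>" using UNp by (simp add: \<mu>_def)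
      finally have a2: "(\<Sum>j=N..d. \<mu> * s j) = T N + \<epsilon>" .
      show ?thesis using a1 a2 by simp
    qed
    also have "\<dots> = (\<Sum>j=1..d. p j)" unfolding sp3[of p] by (simp add: P_def T_def)
    finally show ?thesis using psum by simp
  qed
  have "lorenz d s t x \<le> min (c * x) 1"
    using upper_from_bounds[OF d1 spos ssum tnn tsum tb] x by auto
  then show ?thesis by (simp add: t_def ell_def c_def S_def f_def)
qed

lemma flat_small:
  assumes Dl: "trace_dist d p s < \<epsilon>" and x: "x \<in> {0..1}"
  shows "lorenz d s (flat_approx d p s \<epsilon>) x \<le> ell (2 powr (rel_ent d p s + f_sigma d p s \<epsilon>)) x"
proof -
  define c where "c = 2 powr (rel_ent d p s + f_sigma d p s \<epsilon>)"
  have c1: "1 \<le> c" unfolding c_def using gibbs f_nn by (intro ge_one_powr_ge_zero) auto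
  have teq: "flat_approx d p s \<epsilon> = s" using Dl by (simp add: fun_eq_iff flat_approx_def)
  have tb: "\<forall>j\<in>{1..d}. s j \<le> c * s j" using c1 spos by auto
  have "lorenz d s s x \<le> min (c * x) 1"
    using upper_from_bounds[OF d1 spos ssum _ ssum tb] spos x by (auto simp: less_imp_le)
  then show ?thesis by (simp add: teq ell_def c_def)
qed

end

theorem lemma7:
  fixes d :: nat and p s :: "nat \<Rightarrow> real" and \<epsilon> :: real
  assumes "d \<ge> 1"
    and "\<forall>i\<in>{1..d}. 0 \<le> p i" and "(\<Sum>i=1..d. p i) = 1"
    and "\<forall>i\<in>{1..d}. 0 < s i" and "(\<Sum>i=1..d. s i) = 1"
    and "\<forall>i. 1 \<le> i \<and> i < d \<longrightarrow> p (i+1) / s (i+1) \<le> p i / s i"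
    and "0 < \<epsilon>" and "\<epsilon> < 1"
  shows "\<forall>x\<in>{0..1}.
      lorenz d s (steep_approx d p \<epsilon>) x
        \<ge> ell (2 powr (rel_ent d p s - f_sigma d p s \<epsilon>)) x
    \<and> lorenz d s (flat_approx d p s \<epsilon>) x
        \<le> ell (2 powr (rel_ent d p s + f_sigma d p s \<epsilon>)) x"
proof -
  interpret L7 d p s \<epsilon> using assms by unfold_locales
  show ?thesis
  proof (intro ballI conjI)
    fix x :: real assume x: "x \<in> {0..1}"
    show "ell (2 powr (rel_ent d p s - f_sigma d p s \<epsilon>)) x \<le> lorenz d s (steep_approx d p \<epsilon>) x"
      using steep_case1[OF _ x] steep_case2[OF _ x] by blast
    show "lorenz d s (flat_approx d p s \<epsilon>) x \<le> ell (2 powr (rel_ent d p s + f_sigma d p s \<epsilon>)) x"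
      using flat_small[OF _ x] flat_main[OF _ x] by blast
  qed
qed


end
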